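(* The string rewriting system $W'=\{0_2\rhd\to 0_3\rhd\}\cup A\cup B$ is terminating.
   Context: An SRS induces $u\ell v\to urv$ for each rule $\ell\to r$; terminating means no infinite rewrite sequence. Alphabet $\{0_2,1_2,0_3,1_3,2_3,\lhd,\rhd\}$; $A=\{0_20_3\to0_30_2,\ 0_21_3\to0_31_2,\ 0_22_3\to1_30_2,\ 1_20_3\to1_31_2,\ 1_21_3\to2_30_2,\ 1_22_3\to2_31_2\}$; $B=\{\lhd0_3\to\lhd1_2,\ \lhd1_3\to\lhd0_20_2,\ \lhd2_3\to\lhd0_21_2\}$. *)

theory Defs
  imports Main
begin

text \<open>Alphabet: 0_2, 1_2, 0_3, 1_3, 2_3, left marker, right marker.\<close>
datatype sym = Z2 | O2 | Z3 | O3 | T3 | LM | RM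

type_synonym srs = "(sym list \<times> sym list) set"

definition rstep :: "srs \<Rightarrow> (sym list \<times> sym list) set" where
  "rstep R = {(u @ l @ v, u @ r @ v) | u l r v. (l, r) \<in> R}"

definition terminating :: "srs \<Rightarrow> bool" where
  "terminating R \<longleftrightarrow> \<not> (\<exists>f :: nat \<Rightarrow> sym list. \<forall>i. (f i, f (Suc i)) \<in> rstep R)"

definition A_rules :: srs where
  "A_rules = {([Z2, Z3], [Z3, Z2]), ([Z2, O3], [Z3, O2]), ([Z2, T3], [O3, Z2]),
              ([O2, Z3], [O3, O2]), ([O2, O3], [T3, Z2]), ([O2, T3], [T3, O2])}"

definition B_rules :: srs where
  "B_rules = {([LM, Z3], [LM, O2]), ([LM, O3], [LM, Z2, Z2]), ([LM, T3], [LM, Z2, O2])}"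

definition W'_rules :: srs where
  "W'_rules = {([Z2, RM], [Z3, RM])} \<union> A_rules \<union> B_rules"

end

theory Submission
  imports Defs
begin

fun isB :: "sym \<Rightarrow> nat" where
  "isB Z2 = 1" | "isB O2 = 1" | "isB _ = 0"
fun isT :: "sym \<Rightarrow> nat" where
  "isT Z3 = 1" | "isT O3 = 1" | "isT T3 = 1" | "isT _ = 0"

datatype st = Free nat | Val nat

function v2 :: "nat \<Rightarrow> nat" where
  "v2 n = (if n = 0 \<or> odd n then 0 else Suc (v2 (n div 2)))"
  by pat_completeness auto
termination by (relation "measure id") auto
declare v2.simps[simp del]

lemma v2_double: "v > 0 \<Longrightarrow> v2 (2*v) = Suc (v2 v)"
  by (subst v2.simps) simp

lemma v2_triple: "v2 (3*v) = v2 v"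
proof (induction v rule: less_induct)
  case (less v)
  show ?case
  proof (cases "v = 0 \<or> odd v")
    case True
    then show ?thesis by (auto simp: v2.simps)
  next
    case False
    then obtain w where w: "v = 2*w" "w > 0" by (auto elim: evenE)
    have "v2 (3*v) = v2 (2*(3*w))" using w by (simp add: ac_simps)
    also have "\<dots> = Suc (v2 (3*w))" using w by (intro v2_double) simp
    also have "\<dots> = Suc (v2 w)" using less w by simp
    also have "\<dots> = v2 v" using w by (simp add: v2_double)
    finally show ?thesis .
  qed
qed

fun fin :: "st \<Rightarrow> nat" where
  "fin (Free k) = k" | "fin (Val v) = v2 v"

fun stp :: "st \<Rightarrow> sym \<Rightarrow> st" where
  "stp s LM = Val 1"
| "stp s RM = Free 0"
| "stp (Free k) d = Free (k + isB d)"
| "stp (Val v) Z2 = Val (2*v)"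
| "stp (Val v) O2 = Val (2*v+1)"
| "stp (Val v) Z3 = Val (3*v)"
| "stp (Val v) O3 = Val (3*v+1)"
| "stp (Val v) T3 = Val (3*v+2)"

fun outp :: "st \<Rightarrow> sym \<Rightarrow> nat" where
  "outp s LM = fin s" | "outp s RM = fin s" | "outp s _ = 0"

fun pot :: "st \<Rightarrow> sym list \<Rightarrow> nat" where
  "pot s [] = fin s" | "pot s (x#xs) = outp s x + pot (stp s x) xs"

fun acc :: "st \<Rightarrow> sym list \<Rightarrow> nat" where
  "acc s [] = 0" | "acc s (x#xs) = outp s x + acc (stp s x) xs"

lemma pot_append: "pot s (u @ w) = acc s u + pot (foldl stp s u) w"
  by (induction u arbitrary: s) auto

fun ok :: "st \<Rightarrow> bool" where
  "ok (Free k) = True" | "ok (Val v) = (v > 0)"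

lemma ok_stp: "ok s \<Longrightarrow> ok (stp s x)"
  by (cases s; cases x) auto

lemma ok_foldl: "ok s \<Longrightarrow> ok (foldl stp s u)"
  by (induction u arbitrary: s) (auto simp: ok_stp)

definition cntT :: "sym list \<Rightarrow> nat" where "cntT xs = sum_list (map isT xs)"
definition cntB :: "sym list \<Rightarrow> nat" where "cntB xs = sum_list (map isB xs)"

fun inv :: "sym list \<Rightarrow> nat" where
  "inv [] = 0" | "inv (x#xs) = isB x * cntT xs + inv xs"

lemma inv_append: "inv (u @ w) = inv u + inv w + cntB u * cntT w"
  by (induction u) (auto simp: cntT_def cntB_def algebra_simps)

definition meas :: "sym list \<Rightarrow> nat \<times> nat \<times> nat" where
  "meas w = (pot (Free 0) w, cntT w, inv w)"

lemma A_pot: "(l, r) \<in> A_rules \<Longrightarrow> pot s (l @ v) = pot s (r @ v)"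
  unfolding A_rules_def
  by (cases s) (auto simp: pot_append algebra_simps numeral_eq_Suc)

lemma B_pot: "(l, r) \<in> B_rules \<Longrightarrow> pot s (l @ v) = pot s (r @ v)"
  unfolding B_rules_def
  by (cases s) (auto simp: pot_append)

lemma RM_pot: "ok s \<Longrightarrow> pot s ([Z2, RM] @ v) > pot s ([Z3, RM] @ v)"
  by (cases s) (auto simp: v2_double v2_triple)

lemma step_dec:
  assumes "(w, w') \<in> rstep W'_rules"
  shows "(meas w', meas w) \<in> less_than <*lex*> less_than <*lex*> less_than"
proof -
  obtain u l r v where w: "w = u @ l @ v" "w' = u @ r @ v" and lr: "(l, r) \<in> W'_rules"
    using assms unfolding rstep_def by blast
  let ?s = "foldl stp (Free 0) u"
  have oks: "ok ?s" by (rule ok_foldl) simp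
  have potw: "pot (Free 0) w = acc (Free 0) u + pot ?s (l @ v)"
    "pot (Free 0) w' = acc (Free 0) u + pot ?s (r @ v)"
    using w by (simp_all add: pot_append)
  from lr consider "(l, r) = ([Z2, RM], [Z3, RM])" | "(l, r) \<in> A_rules" | "(l, r) \<in> B_rules"
    unfolding W'_rules_def by blast
  then show ?thesis
  proof cases
    case 1
    then have "pot (Free 0) w' < pot (Free 0) w" using potw RM_pot[OF oks, of v] by simp
    then show ?thesis by (simp add: meas_def)
  next
    case 2
    then have p: "pot (Free 0) w' = pot (Free 0) w" using potw A_pot by simp
    have "cntT l = cntT r \<and> cntB l = cntB r \<and> inv r < inv l"
      using 2 unfolding A_rules_def by (auto simp: cntT_def cntB_def)
    then have "cntT w' = cntT w \<and> inv w' < inv w"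
      using w by (simp add: inv_append cntT_def cntB_def)
    then show ?thesis using p by (simp add: meas_def)
  next
    case 3
    then have p: "pot (Free 0) w' = pot (Free 0) w" using potw B_pot by simp
    have "cntT r < cntT l"
      using 3 unfolding B_rules_def by (auto simp: cntT_def)
    then have "cntT w' < cntT w"
      using w by (simp add: cntT_def)
    then show ?thesis using p by (simp add: meas_def)
  qed
qed

theorem mainTheorem9:
  shows "terminating W'_rules"
  unfolding terminating_def
proof
  assume "\<exists>f :: nat \<Rightarrow> sym list. \<forall>i. (f i, f (Suc i)) \<in> rstep W'_rules"
  then obtain f :: "nat \<Rightarrow> sym list" where f: "\<forall>i. (f i, f (Suc i)) \<in> rstep W'_rules" by blast
  have "wf (less_than <*lex*> less_than <*lex*> less_than)" by auto
  moreover have "\<forall>i. ((meas \<circ> f) (Suc i), (meas \<circ> f) i) \<in> less_than <*lex*> less_than <*lex*> less_than"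
    using f step_dec by simp
  ultimately show False using wf_iff_no_infinite_down_chain by blast
qed

end
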